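(* Let $N$ and $\Delta$ be integers with $\frac{N}{2} < \Delta \le N$. Then for every integer $M$ with $\binom{\Delta}{2} \le M \le f(N,\Delta)$, the pair $(N,M)$ is feasible for the family of all line graphs.
   Context: All graphs are finite and simple; $L(G)$ is the line graph of $G$; $e(\cdot)$, $\Delta(\cdot)$, $\delta(\cdot)$ denote number of edges, maximum degree and minimum degree. For integers $N \ge \Delta \ge 1$, $f(N,\Delta) = \max\{ e(L(G)) : e(G)=N, \Delta(G)=\Delta, \delta(G)\geq 1\}$. A pair $(N,M)$ is feasible (for the family of all line graphs) if there exists a graph $G$ such that $L(G)$ has exactly $N$ vertices and exactly $M$ edges. *)

theory Defs
  imports Main
begin

text \<open>A finite simple graph is represented by its edge set: a finite set of
2-element vertex sets (vertices are natural numbers). Its vertex set is taken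
to be the set of endpoints, so every vertex has degree at least 1.\<close>

definition simple_graph :: "nat set set \<Rightarrow> bool" where
  "simple_graph E \<longleftrightarrow> finite E \<and> (\<forall>e\<in>E. card e = 2)"

definition vertices :: "nat set set \<Rightarrow> nat set" where
  "vertices E = \<Union>E"

definition degree :: "nat set set \<Rightarrow> nat \<Rightarrow> nat" where
  "degree E v = card {e\<in>E. v \<in> e}"

definition max_degree :: "nat set set \<Rightarrow> nat" where
  "max_degree E = Max (degree E ` vertices E)"

definition min_degree :: "nat set set \<Rightarrow> nat" where
  "min_degree E = Min (degree E ` vertices E)"

definition line_edges :: "nat set set \<Rightarrow> nat set set set" where
  "line_edges E = {{e1, e2} | e1 e2. e1 \<in> E \<and> e2 \<in> E \<and> e1 \<noteq> e2 \<and> e1 \<inter> e2 \<noteq> {}}"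

definition f_max :: "nat \<Rightarrow> nat \<Rightarrow> nat" where
  "f_max N D = Max {card (line_edges E) | E. simple_graph E \<and> card E = N
      \<and> max_degree E = D \<and> min_degree E \<ge> 1}"

definition feasible_line :: "nat \<Rightarrow> nat \<Rightarrow> bool" where
  "feasible_line N M \<longleftrightarrow> (\<exists>E. simple_graph E \<and> card E = N \<and> card (line_edges E) = M)"

end

theory Submission imports Defs begin

lemma finite_line_edges: "finite E \<Longrightarrow> finite (line_edges E)"
proof -
  assume "finite E"
  have "line_edges E \<subseteq> Pow E" unfolding line_edges_def by auto
  then show ?thesis using \<open>finite E\<close> by (meson finite_Pow_iff finite_subset)
qed

lemma degree_insert:
  assumes "finite E" "e \<notin> E"
  shows "degree (insert e E) x = degree E x + (if x \<in> e then 1 else 0)"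
proof (cases "x \<in> e")
  case True
  then have "{e'\<in>insert e E. x \<in> e'} = insert e {e'\<in>E. x \<in> e'}" by auto
  then show ?thesis using assms True by (simp add: degree_def)
next
  case False
  then have "{e'\<in>insert e E. x \<in> e'} = {e'\<in>E. x \<in> e'}" by auto
  then show ?thesis using False by (simp add: degree_def)
qed

lemma two_elem_eq:
  assumes "card e' = 2" "u \<in> e'" "w \<in> e'" "u \<noteq> w"
  shows "e' = {u,w}"
  using assms by (auto simp: card_2_iff)

lemma add_edge:
  assumes sg: "simple_graph E" and uw: "u \<noteq> w" and ne: "{u,w} \<notin> E"
  shows "card (line_edges (insert {u,w} E)) = card (line_edges E) + degree E u + degree E w"
proof -
  let ?e = "{u,w}"
  have fin: "finite E" using sg by (simp add: simple_graph_def)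
  let ?U = "{e'\<in>E. u \<in> e'}" and ?W = "{e'\<in>E. w \<in> e'}"
  have eq: "line_edges (insert ?e E) = line_edges E \<union> (\<lambda>e'. {?e, e'}) ` (?U \<union> ?W)"
  proof
    show "line_edges (insert ?e E) \<subseteq> line_edges E \<union> (\<lambda>e'. {?e, e'}) ` (?U \<union> ?W)"
    proof
      fix s assume "s \<in> line_edges (insert ?e E)"
      then obtain e1 e2 where s: "s = {e1,e2}" "e1 \<in> insert ?e E" "e2 \<in> insert ?e E" "e1 \<noteq> e2" "e1 \<inter> e2 \<noteq> {}"
        unfolding line_edges_def by blast
      show "s \<in> line_edges E \<union> (\<lambda>e'. {?e, e'}) ` (?U \<union> ?W)"
      proof (cases "e1 = ?e")
        case True
        then have "e2 \<in> ?U \<union> ?W" using s by auto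
        then show ?thesis using s True by blast
      next
        case f1: False
        show ?thesis
        proof (cases "e2 = ?e")
          case True
          then have "e1 \<in> ?U \<union> ?W" using s f1 by auto
          moreover have "s = {?e, e1}" using s True by auto
          ultimately show ?thesis by blast
        next
          case False
          then have "s \<in> line_edges E" using s f1 unfolding line_edges_def by blast
          then show ?thesis by blast
        qed
      qed
    qed
  next
    show "line_edges E \<union> (\<lambda>e'. {?e, e'}) ` (?U \<union> ?W) \<subseteq> line_edges (insert ?e E)"
    proof
      fix s assume "s \<in> line_edges E \<union> (\<lambda>e'. {?e, e'}) ` (?U \<union> ?W)"
      then show "s \<in> line_edges (insert ?e E)"
      proof
        assume "s \<in> line_edges E" then show ?thesis unfolding line_edges_def by blast
      next
        assume "s \<in> (\<lambda>e'. {?e, e'}) ` (?U \<union> ?W)"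
        then obtain e' where e': "e' \<in> ?U \<union> ?W" "s = {?e, e'}" by blast
        then have "e' \<noteq> ?e" using ne by auto
        moreover have "?e \<inter> e' \<noteq> {}" using e' by auto
        ultimately show ?thesis using e' unfolding line_edges_def by blast
      qed
    qed
  qed
  have disj: "line_edges E \<inter> (\<lambda>e'. {?e, e'}) ` (?U \<union> ?W) = {}"
  proof (rule ccontr)
    assume "line_edges E \<inter> (\<lambda>e'. {?e, e'}) ` (?U \<union> ?W) \<noteq> {}"
    then obtain s where s1: "s \<in> line_edges E" and s2: "s \<in> (\<lambda>e'. {?e, e'}) ` (?U \<union> ?W)" by blast
    from s1 obtain e1 e2 where "s = {e1,e2}" "e1 \<in> E" "e2 \<in> E" unfolding line_edges_def by blast
    then have "s \<subseteq> E" by blast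
    moreover from s2 have "?e \<in> s" by blast
    ultimately show False using ne by blast
  qed
  have inj: "inj_on (\<lambda>e'. {?e, e'}) (?U \<union> ?W)"
  proof (rule inj_onI)
    fix x y assume "x \<in> ?U \<union> ?W" "y \<in> ?U \<union> ?W" "{?e, x} = {?e, y}"
    moreover have "x \<noteq> ?e" "y \<noteq> ?e" using ne calculation by auto
    ultimately show "x = y" by (metis doubleton_eq_iff)
  qed
  have UW: "?U \<inter> ?W = {}"
  proof (rule ccontr)
    assume "?U \<inter> ?W \<noteq> {}"
    then obtain e' where h: "e' \<in> E" "u \<in> e'" "w \<in> e'" by blast
    moreover have c2: "card e' = 2" using sg h by (simp add: simple_graph_def)
    ultimately have "e' = ?e" using two_elem_eq[OF c2 h(2) h(3) uw] by simp
    then show False using ne \<open>e' \<in> E\<close> by simp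
  qed
  have "card (line_edges (insert ?e E)) = card (line_edges E) + card ((\<lambda>e'. {?e, e'}) ` (?U \<union> ?W))"
    unfolding eq using disj fin finite_line_edges by (simp add: card_Un_disjoint)
  also have "card ((\<lambda>e'. {?e, e'}) ` (?U \<union> ?W)) = card (?U \<union> ?W)" using inj by (simp add: card_image)
  also have "card (?U \<union> ?W) = card ?U + card ?W" using UW fin by (simp add: card_Un_disjoint)
  finally show ?thesis by (simp add: degree_def)
qed

lemma choose2_Suc: "Suc n choose 2 = (n choose 2) + n"
  by (simp add: numeral_2_eq_2)

lemma sg_finite_vertices: "simple_graph E \<Longrightarrow> finite (\<Union>E)"
  unfolding simple_graph_def by (metis card.infinite finite_Union zero_neq_numeral)

lemma connect:
  assumes sg: "simple_graph E" and fW: "finite W" and uW: "u \<notin> W"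
    and nE: "\<forall>w\<in>W. {u,w} \<notin> E" and dc: "\<forall>w\<in>W. degree E w = c"
  shows "simple_graph (E \<union> (\<lambda>w. {u,w}) ` W) \<and> card (E \<union> (\<lambda>w. {u,w}) ` W) = card E + card W
    \<and> card (line_edges (E \<union> (\<lambda>w. {u,w}) ` W)) = card (line_edges E) + card W * degree E u + (card W choose 2) + card W * c
    \<and> (\<forall>x. degree (E \<union> (\<lambda>w. {u,w}) ` W) x = degree E x + (if x = u then card W else if x \<in> W then 1 else 0))"
  using fW uW nE dc
proof (induction W rule: finite_induct)
  case empty then show ?case using sg by simp
next
  case (insert w W)
  let ?F = "E \<union> (\<lambda>w. {u,w}) ` W"
  have IH: "simple_graph ?F \<and> card ?F = card E + card W
    \<and> card (line_edges ?F) = card (line_edges E) + card W * degree E u + (card W choose 2) + card W * c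
    \<and> (\<forall>x. degree ?F x = degree E x + (if x = u then card W else if x \<in> W then 1 else 0))"
    using insert.IH insert.prems by blast
  have eqF: "E \<union> (\<lambda>w. {u,w}) ` insert w W = insert {u,w} ?F" by auto
  have uw: "u \<noteq> w" using insert.prems by auto
  have nF: "{u,w} \<notin> ?F"
  proof
    assume "{u,w} \<in> ?F"
    moreover have "{u,w} \<notin> E" using insert.prems by auto
    ultimately obtain w' where "w' \<in> W" "{u,w} = {u,w'}" by blast
    then have "w = w'" using uw by (metis doubleton_eq_iff)
    then show False using insert.hyps \<open>w' \<in> W\<close> by simp
  qed
  have sgF: "simple_graph ?F" using IH by blast
  have finF: "finite ?F" using sgF by (simp add: simple_graph_def)
  have dF: "\<forall>x. degree ?F x = degree E x + (if x = u then card W else if x \<in> W then 1 else 0)" using IH by blast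
  have dFu: "degree ?F u = degree E u + card W" using dF by simp
  have dFw: "degree ?F w = c" using dF uw insert.hyps insert.prems by auto
  have cW: "card (insert w W) = Suc (card W)" using insert.hyps by simp
  have "simple_graph (insert {u,w} ?F)" using sgF uw by (simp add: simple_graph_def)
  moreover have "card (insert {u,w} ?F) = card E + card (insert w W)" using IH nF finF cW by simp
  moreover have "card (line_edges (insert {u,w} ?F)) = card (line_edges E) + card (insert w W) * degree E u + (card (insert w W) choose 2) + card (insert w W) * c"
    using add_edge[OF sgF uw nF] dFu dFw IH cW by (simp add: choose2_Suc algebra_simps)
  moreover have "\<forall>x. degree (insert {u,w} ?F) x = degree E x + (if x = u then card (insert w W) else if x \<in> insert w W then 1 else 0)"
    using degree_insert[OF finF nF] dF cW uw insert.hyps by auto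
  ultimately show ?case unfolding eqF by blast
qed

lemma sg_empty: "simple_graph {}" by (simp add: simple_graph_def)
lemma le_empty: "line_edges {} = {}" by (simp add: line_edges_def)
lemma deg_empty: "degree {} x = 0" by (simp add: degree_def)

definition star :: "nat \<Rightarrow> nat set set" where "star D = (\<lambda>w. {0::nat,w}) ` {1..D}"

lemma star_props: "simple_graph (star D) \<and> card (star D) = D \<and> card (line_edges (star D)) = (D choose 2)
  \<and> (\<forall>x. degree (star D) x = (if x = 0 then D else if x \<in> {1..D} then 1 else 0))"
  using connect[OF sg_empty, of "{1..D}" 0 0]
  by (simp add: star_def le_empty deg_empty)

lemma choose2_add: "(x + y) choose 2 = (x choose 2) + x * y + (y choose 2)"
  by (induction y) (simp_all add: choose2_Suc)

lemma top:
  assumes "j < D" "a \<le> j"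
  shows "\<exists>E. simple_graph E \<and> card E = D + j \<and> card (line_edges E) = (D choose 2) + (Suc j choose 2) + a"
proof -
  define E0 where "E0 = star D"
  define W1 where "W1 = {2..a+1}"
  define E1 where "E1 = E0 \<union> (\<lambda>w. {1,w}) ` W1"
  define W2 where "W2 = {D+1..D+(j-a)}"
  define E2 where "E2 = E1 \<union> (\<lambda>w. {1,w}) ` W2"
  have S: "simple_graph E0" "card E0 = D" "card (line_edges E0) = (D choose 2)"
    "\<And>x. degree E0 x = (if x = 0 then D else if x \<in> {1..D} then 1 else 0)"
    using star_props unfolding E0_def by blast+
  have all0: "\<forall>e\<in>E0. (0::nat) \<in> e" unfolding E0_def star_def by blast
  have c1a: "1 \<notin> W1" unfolding W1_def by simp
  have c1b: "\<forall>w\<in>W1. {1,w} \<notin> E0"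
  proof
    fix w assume "w \<in> W1"
    then have "(0::nat) \<notin> {1,w}" unfolding W1_def by simp
    then show "{1,w} \<notin> E0" using bspec[OF all0, of "{1,w}"] by fast
  qed
  have c1c: "\<forall>w\<in>W1. degree E0 w = 1"
  proof
    fix w assume "w \<in> W1"
    then have "w \<noteq> 0" "w \<in> {1..D}" unfolding W1_def using assms by auto
    then show "degree E0 w = 1" using S(4)[of w] by simp
  qed
  have fW1: "finite W1" "card W1 = a" unfolding W1_def by auto
  have C1: "simple_graph E1 \<and> card E1 = card E0 + card W1
    \<and> card (line_edges E1) = card (line_edges E0) + card W1 * degree E0 1 + (card W1 choose 2) + card W1 * 1
    \<and> (\<forall>x. degree E1 x = degree E0 x + (if x = 1 then card W1 else if x \<in> W1 then 1 else 0))"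
    unfolding E1_def by (rule connect[OF S(1) fW1(1) c1a c1b c1c])
  have d01: "degree E0 1 = 1" using S(4)[of 1] assms by simp
  have T1: "simple_graph E1" "card E1 = D + a"
    "card (line_edges E1) = (D choose 2) + a * 1 + (a choose 2) + a * 1"
    "\<And>x. degree E1 x = degree E0 x + (if x = 1 then a else if x \<in> W1 then 1 else 0)"
    using C1 fW1(2) S(2) S(3) d01 by simp_all
  have c2a: "1 \<notin> W2" unfolding W2_def using assms by simp
  have c2b: "\<forall>w\<in>W2. {1,w} \<notin> E1"
  proof
    fix w assume w: "w \<in> W2"
    then have "(0::nat) \<notin> {1,w}" unfolding W2_def by simp
    then have "{1,w} \<notin> E0" using bspec[OF all0, of "{1,w}"] by fast
    moreover have "{1,w} \<notin> (\<lambda>w. {1,w}) ` W1"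
    proof
      assume "{1,w} \<in> (\<lambda>w. {1,w}) ` W1"
      then obtain w' where "w' \<in> W1" "{1,w} = {1,w'}" by blast
      then have "w = w'" using w c1a unfolding W2_def by (metis doubleton_eq_iff)
      then show False using w \<open>w' \<in> W1\<close> assms unfolding W1_def W2_def by simp
    qed
    ultimately show "{1,w} \<notin> E1" unfolding E1_def by blast
  qed
  have c2c: "\<forall>w\<in>W2. degree E1 w = 0"
  proof
    fix w assume "w \<in> W2"
    then have "w \<noteq> 0" "w \<notin> {1..D}" "w \<noteq> 1" "w \<notin> W1" unfolding W1_def W2_def using assms by auto
    then show "degree E1 w = 0" using S(4)[of w] T1(4)[of w] by simp
  qed
  have fW2: "finite W2" "card W2 = j - a" unfolding W2_def by auto
  have C2: "simple_graph E2 \<and> card E2 = card E1 + card W2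
    \<and> card (line_edges E2) = card (line_edges E1) + card W2 * degree E1 1 + (card W2 choose 2) + card W2 * 0
    \<and> (\<forall>x. degree E2 x = degree E1 x + (if x = 1 then card W2 else if x \<in> W2 then 1 else 0))"
    unfolding E2_def by (rule connect[OF T1(1) fW2(1) c2a c2b c2c])
  have d11: "degree E1 1 = 1 + a" using T1(4)[of 1] d01 by simp
  have r1: "simple_graph E2" "card E2 = D + j" using C2 T1(2) fW2(2) assms by simp_all
  have r2: "card (line_edges E2) = (D choose 2) + a * 1 + (a choose 2) + a * 1 + (j-a) * (1 + a) + ((j-a) choose 2)"
    using C2 T1(3) fW2(2) d11 by simp
  have "Suc j choose 2 = (Suc a + (j - a)) choose 2" using assms by simp
  then have "Suc j choose 2 = (a choose 2) + a + Suc a * (j - a) + ((j-a) choose 2)"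
    by (simp only: choose2_add choose2_Suc)
  then have "card (line_edges E2) = (D choose 2) + (Suc j choose 2) + a" using r2 by simp
  then show ?thesis using r1 by blast
qed

lemma add_iso:
  assumes sg: "simple_graph E"
  shows "\<exists>E'. simple_graph E' \<and> card E' = card E + 1 \<and> card (line_edges E') = card (line_edges E)
     \<and> (\<forall>z. degree E' z = degree E z \<or> (degree E z = 0 \<and> degree E' z = 1))"
proof -
  have fv: "finite (\<Union>E)" using sg_finite_vertices[OF sg] .
  obtain x :: nat where x: "x \<notin> \<Union>E" using ex_new_if_finite[OF infinite_UNIV_nat fv] by blast
  obtain y :: nat where y: "y \<notin> insert x (\<Union>E)" using ex_new_if_finite[OF infinite_UNIV_nat] fv by blast
  have fin: "finite E" using sg by (simp add: simple_graph_def)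
  have xy: "x \<noteq> y" using y by auto
  have nE: "{x,y} \<notin> E" using x by blast
  have dx: "degree E x = 0" using x fin unfolding degree_def by auto
  have dy: "degree E y = 0" using y fin unfolding degree_def by auto
  have "simple_graph (insert {x,y} E)" using sg xy by (simp add: simple_graph_def)
  moreover have "card (insert {x,y} E) = card E + 1" using fin nE by simp
  moreover have "card (line_edges (insert {x,y} E)) = card (line_edges E)"
    using add_edge[OF sg xy nE] dx dy by simp
  moreover have "\<forall>z. degree (insert {x,y} E) z = degree E z \<or> (degree E z = 0 \<and> degree (insert {x,y} E) z = 1)"
    using degree_insert[OF fin nE] dx dy by auto
  ultimately show ?thesis by blast
qed

lemma lower:
  assumes "k < D" "m \<le> (k choose 2) + 2 * k"
  shows "\<exists>E. simple_graph E \<and> card E = D + k \<and> card (line_edges E) = (D choose 2) + m"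
  using assms
proof (induction k arbitrary: m)
  case 0
  then have "m = 0" by (simp add: numeral_2_eq_2)
  then show ?case using star_props[of D] by (intro exI[of _ "star D"]) auto
next
  case (Suc k)
  show ?case
  proof (cases "m \<le> (k choose 2) + 2 * k")
    case True
    then obtain E where E: "simple_graph E" "card E = D + k" "card (line_edges E) = (D choose 2) + m"
      using Suc by auto
    then show ?thesis using add_iso[OF E(1)] by auto
  next
    case False
    have e: "Suc (Suc k) choose 2 = (k choose 2) + 2 * k + 1" by (simp add: choose2_Suc)
    have e2: "Suc k choose 2 = (k choose 2) + k" by (simp add: choose2_Suc)
    define a where "a = m - (Suc (Suc k) choose 2)"
    have a: "a \<le> Suc k" "m = (Suc (Suc k) choose 2) + a" using False Suc.prems e e2 unfolding a_def by auto
    show ?thesis using top[OF Suc.prems(1) a(1)] a(2) by (simp add: algebra_simps)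
  qed
qed

lemma witness:
  assumes "1 \<le> D"
  shows "\<exists>E. simple_graph E \<and> card E = D + k \<and> (\<forall>z. degree E z \<le> D) \<and> degree E 0 = D"
proof (induction k)
  case 0
  then show ?case using star_props[of D] assms by (intro exI[of _ "star D"]) auto
next
  case (Suc k)
  then obtain E where E: "simple_graph E" "card E = D + k" "\<forall>z. degree E z \<le> D" "degree E 0 = D" by blast
  obtain E' where E': "simple_graph E'" "card E' = card E + 1"
     "\<forall>z. degree E' z = degree E z \<or> (degree E z = 0 \<and> degree E' z = 1)"
    using add_iso[OF E(1)] by blast
  have "\<forall>z. degree E' z \<le> D" using E'(3) E(3) assms by (metis)
  moreover have "degree E' 0 = D" using E'(3)[rule_format, of 0] E(4) assms by auto
  moreover have "card E' = D + Suc k" using E'(2) E(2) by simp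
  ultimately show ?case using E'(1) by blast
qed

lemma mixed:
  assumes sg: "simple_graph E" and e1: "e1 \<in> E" "v \<in> e1" and e2: "e2 \<in> E" "v \<notin> e2"
    and int: "e1 \<inter> e2 \<noteq> {}"
  shows "{e1,e2} \<in> (\<lambda>(f,x). {{v,x},f}) ` (SIGMA f:(E - {e\<in>E. v \<in> e}). f)"
proof -
  have "card e1 = 2" using sg e1 by (simp add: simple_graph_def)
  then obtain x y where xy: "e1 = {x,y}" by (auto simp: card_2_iff)
  obtain z where z: "e1 = {v,z}" using xy e1(2) by blast
  have "z \<in> e2" using int e2(2) z by blast
  moreover have "e2 \<in> E - {e\<in>E. v \<in> e}" using e2 by blast
  ultimately have "(e2,z) \<in> (SIGMA f:(E - {e\<in>E. v \<in> e}). f)" by blast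
  moreover have "{e1,e2} = (\<lambda>(f,x). {{v,x},f}) (e2,z)" using z by simp
  ultimately show ?thesis by blast
qed

lemma upper:
  assumes sg: "simple_graph E" and dv: "degree E v = D" and cE: "card E = N"
  shows "card (line_edges E) \<le> (D choose 2) + ((N - D) choose 2) + 2 * (N - D)"
proof -
  define A where "A = {e\<in>E. v \<in> e}"
  define B where "B = E - A"
  define X1 where "X1 = {S. S \<subseteq> A \<and> card S = 2}"
  define X2 where "X2 = {S. S \<subseteq> B \<and> card S = 2}"
  define X3 where "X3 = (\<lambda>(f,x). {{v,x},f}) ` (SIGMA f:B. f)"
  have fin: "finite E" using sg by (simp add: simple_graph_def)
  have fA: "finite A" "card A = D" using fin dv unfolding A_def degree_def by auto
  have fB: "finite B" "card B = N - D" unfolding B_def using fin fA cE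
    by (auto simp: card_Diff_subset A_def)
  have sub: "line_edges E \<subseteq> X1 \<union> X2 \<union> X3"
  proof
    fix s assume "s \<in> line_edges E"
    then obtain e1 e2 where s: "s = {e1,e2}" "e1 \<in> E" "e2 \<in> E" "e1 \<noteq> e2" "e1 \<inter> e2 \<noteq> {}"
      unfolding line_edges_def by blast
    have c2: "card s = 2" using s by simp
    show "s \<in> X1 \<union> X2 \<union> X3"
    proof (cases "v \<in> e1")
      case True
      show ?thesis
      proof (cases "v \<in> e2")
        case True
        then have "s \<in> X1" using \<open>v \<in> e1\<close> s c2 unfolding X1_def A_def by blast
        then show ?thesis by blast
      next
        case False
        have "s \<in> X3" using mixed[OF sg s(2) \<open>v \<in> e1\<close> s(3) False s(5)] s(1)
          unfolding X3_def B_def A_def by simp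
        then show ?thesis by blast
      qed
    next
      case f1: False
      show ?thesis
      proof (cases "v \<in> e2")
        case True
        have "e2 \<inter> e1 \<noteq> {}" using s(5) by blast
        from mixed[OF sg s(3) True s(2) f1 this] have "s \<in> X3" using s(1)
          unfolding X3_def B_def A_def by (simp add: insert_commute)
        then show ?thesis by blast
      next
        case False
        then have "s \<in> X2" using f1 s c2 unfolding X2_def A_def B_def by blast
        then show ?thesis by blast
      qed
    qed
  qed
  have fX1: "finite X1" "card X1 = D choose 2" unfolding X1_def using fA
    by (auto simp: n_subsets)
  have fX2: "finite X2" "card X2 = (N - D) choose 2" unfolding X2_def using fB
    by (auto simp: n_subsets)
  have fSig: "finite (SIGMA f:B. f)" using fB(1) sg unfolding B_def simple_graph_def
    by (intro finite_SigmaI) (auto intro: card_ge_0_finite)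
  have cSig: "card (SIGMA f:B. f) = 2 * (N - D)"
  proof -
    have "\<forall>f\<in>B. card f = 2" using sg unfolding B_def simple_graph_def by blast
    moreover have "\<forall>f\<in>B. finite f" using calculation by (auto intro: card_ge_0_finite)
    ultimately have "card (SIGMA f:B. f) = (\<Sum>f\<in>B. 2)" using fB(1) by (simp add: card_SigmaI)
    then show ?thesis using fB(2) by simp
  qed
  have fX3: "finite X3" "card X3 \<le> 2 * (N - D)" unfolding X3_def
    using fSig apply simp
    using card_image_le[OF fSig, of "\<lambda>(f,x). {{v,x},f}"] cSig by simp
  have "card (line_edges E) \<le> card (X1 \<union> X2 \<union> X3)"
    using sub fX1 fX2 fX3 by (intro card_mono) auto
  also have "\<dots> \<le> card X1 + card X2 + card X3"
    by (meson card_Un_le add_le_mono1 order_trans)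
  finally show ?thesis using fX1 fX2 fX3 by linarith
qed

lemma maxdeg_exists:
  assumes sg: "simple_graph E" and ne: "E \<noteq> {}"
  shows "\<exists>v. degree E v = max_degree E"
proof -
  have "finite (\<Union>E)" using sg_finite_vertices[OF sg] .
  moreover have "\<Union>E \<noteq> {}"
  proof -
    obtain e where "e \<in> E" using ne by blast
    then have "card e = 2" using sg by (simp add: simple_graph_def)
    then have "e \<noteq> {}" by auto
    then show ?thesis using \<open>e \<in> E\<close> by blast
  qed
  ultimately have "max_degree E \<in> degree E ` \<Union>E" unfolding max_degree_def vertices_def
    by (intro Max_in) auto
  then show ?thesis by auto
qed

lemma mindeg:
  assumes sg: "simple_graph E" and ne: "E \<noteq> {}"
  shows "1 \<le> min_degree E"
proof -
  have fv: "finite (\<Union>E)" using sg_finite_vertices[OF sg] .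
  have fin: "finite E" using sg by (simp add: simple_graph_def)
  have "\<Union>E \<noteq> {}"
  proof -
    obtain e where "e \<in> E" using ne by blast
    then have "card e = 2" using sg by (simp add: simple_graph_def)
    then have "e \<noteq> {}" by auto
    then show ?thesis using \<open>e \<in> E\<close> by blast
  qed
  then have "min_degree E \<in> degree E ` \<Union>E" unfolding min_degree_def vertices_def
    using fv by (intro Min_in) auto
  then obtain v where v: "v \<in> \<Union>E" "min_degree E = degree E v" by auto
  then obtain e where "e \<in> E" "v \<in> e" by blast
  then have "{e'\<in>E. v \<in> e'} \<noteq> {}" by blast
  then have "card {e'\<in>E. v \<in> e'} \<noteq> 0" using fin by simp
  then show ?thesis using v unfolding degree_def by simp
qed

lemma maxdeg_eq:
  assumes sg: "simple_graph E" and le: "\<forall>z. degree E z \<le> D" and d0: "degree E 0 = D" and D1: "1 \<le> D"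
  shows "max_degree E = D"
proof -
  have fv: "finite (\<Union>E)" using sg_finite_vertices[OF sg] .
  have fin: "finite E" using sg by (simp add: simple_graph_def)
  have "{e\<in>E. 0 \<in> e} \<noteq> {}" using d0 D1 unfolding degree_def by (metis card.empty not_one_le_zero)
  then have "0 \<in> \<Union>E" by blast
  then show ?thesis unfolding max_degree_def vertices_def
    using fv le d0 by (intro Max_eqI) auto
qed

theorem mainTheorem16:
  fixes N D M :: nat
  assumes "N < 2 * D" and "D \<le> N"
    and "D choose 2 \<le> M" and "M \<le> f_max N D"
  shows "feasible_line N M"
proof -
  define k where "k = N - D"
  have D1: "1 \<le> D" using assms by linarith
  have kD: "k < D" "N = D + k" unfolding k_def using assms by auto
  define B0 where "B0 = (D choose 2) + (k choose 2) + 2 * k"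
  define Sset where "Sset = {card (line_edges E) | E. simple_graph E \<and> card E = N
      \<and> max_degree E = D \<and> min_degree E \<ge> 1}"
  have fm: "f_max N D = Max Sset" unfolding f_max_def Sset_def by simp
  have bnd: "\<forall>x\<in>Sset. x \<le> B0"
  proof
    fix x assume "x \<in> Sset"
    then obtain E where E: "x = card (line_edges E)" "simple_graph E" "card E = N" "max_degree E = D"
      unfolding Sset_def by blast
    have "E \<noteq> {}" using E(3) kD D1 by auto
    then obtain v where "degree E v = D" using maxdeg_exists[OF E(2)] E(4) by auto
    from upper[OF E(2) this E(3)] show "x \<le> B0" unfolding B0_def k_def using E(1) by simp
  qed
  obtain W where W: "simple_graph W" "card W = D + k" "\<forall>z. degree W z \<le> D" "degree W 0 = D"
    using witness[OF D1] by blast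
  have Wne: "W \<noteq> {}" using W(2) D1 by auto
  have "card (line_edges W) \<in> Sset" unfolding Sset_def
    using W kD maxdeg_eq[OF W(1) W(3) W(4) D1] mindeg[OF W(1) Wne] by auto
  then have Sne: "Sset \<noteq> {}" by blast
  have Sfin: "finite Sset" using bnd by (meson finite_atMost finite_subset subsetI atMost_iff)
  have "f_max N D \<le> B0" unfolding fm using Max_in[OF Sfin Sne] bnd by blast
  then have mb: "M - (D choose 2) \<le> (k choose 2) + 2 * k" using assms(4) unfolding B0_def by linarith
  obtain E where E: "simple_graph E" "card E = D + k" "card (line_edges E) = (D choose 2) + (M - (D choose 2))"
    using lower[OF kD(1) mb] by blast
  then show ?thesis unfolding feasible_line_def using kD(2) assms(3) by auto
qed

end
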